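(* Let $\lambda>0$ and let $f$ be a bounded, non-constant function belonging to $\mathcal B_{\lambda}$. For $x,y>0$ let $dP_{y,x}$ be the gamma distribution on $(0,\infty)$ with density $\frac{1}{\Gamma(y)}(y/x)^y t^{y-1}e^{-ty/x}$ with respect to Lebesgue measure, and let $g_\lambda(y)=\frac{y^{\lambda}\Gamma(y)}{\Gamma(\lambda+y)}$. (i) If $\lambda\le 1$, then for all $x,y>0$, $$\int_0^\infty f(t)\,dP_{y,x}(t)<f(x).$$ (ii) If $\lambda>1$, then for all $x,y>0$, $$g_\lambda(y)\int_0^\infty f(t)\,dP_{y,x}(t)<f(x).$$
   Context: For $\lambda>0$, $\mathcal B_\lambda$ (generalized Bernstein functions of order $\lambda$) is the class of non-negative functions $f$ on $(0,\infty)$ having derivatives of all orders such that $x\mapsto f'(x)x^{1-\lambda}$ is completely monotonic on $(0,\infty)$. *)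

theory Defs
  imports "HOL-Analysis.Analysis"
begin

definition smooth_on :: "real set \<Rightarrow> (real \<Rightarrow> real) \<Rightarrow> bool" where
  "smooth_on S f \<longleftrightarrow> (\<forall>n. \<forall>x\<in>S. ((deriv ^^ n) f) differentiable (at x))"

definition completely_monotonic_on :: "real set \<Rightarrow> (real \<Rightarrow> real) \<Rightarrow> bool" where
  "completely_monotonic_on S g \<longleftrightarrow>
     smooth_on S g \<and> (\<forall>n. \<forall>x\<in>S. (-1) ^ n * (deriv ^^ n) g x \<ge> 0)"

definition gen_bernstein :: "real \<Rightarrow> (real \<Rightarrow> real) \<Rightarrow> bool" where
  "gen_bernstein lam f \<longleftrightarrow>
     (\<forall>x>0. f x \<ge> 0) \<and> smooth_on {0<..} f \<and>
     completely_monotonic_on {0<..} (\<lambda>x. deriv f x * x powr (1 - lam))"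

definition gamma_dens :: "real \<Rightarrow> real \<Rightarrow> real \<Rightarrow> real" where
  "gamma_dens y x t = (1 / Gamma y) * (y / x) powr y * t powr (y - 1) * exp (- t * y / x)"

definition g_lam :: "real \<Rightarrow> real \<Rightarrow> real" where
  "g_lam lam y = y powr lam * Gamma y / Gamma (lam + y)"

end

theory Submission
  imports Defs
begin


lemma hbi_eq:
  assumes "has_bochner_integral M f v" "f = g" "v = w"
  shows "has_bochner_integral M g w"
  using assms(1) unfolding assms(2,3) .

lemma gamma_base:
  assumes "(a::real) > 0"
  shows "has_bochner_integral lborel (\<lambda>t. indicator {0<..} t * (t powr (a-1) / exp t)) (Gamma a)"
proof -
  have eq: "(\<lambda>t. indicator {0..} t * t powr (a - 1) / exp t) = (\<lambda>t. indicator {0<..} t * (t powr (a-1) / exp t))"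
  proof
    fix t :: real show "indicator {0..} t * t powr (a - 1) / exp t = indicator {0<..} t * (t powr (a-1) / exp t)"
      by (cases "t = 0") (auto simp: indicator_def)
  qed
  have nn: "(\<integral>\<^sup>+t. ennreal (indicator {0..} t * t powr (a - 1) / exp t) \<partial>lborel) = ennreal (Gamma a)"
    using Gamma_conv_nn_integral_real[OF assms] by simp
  have "has_bochner_integral lborel (\<lambda>t. indicator {0..} t * t powr (a - 1) / exp t) (Gamma a)"
  proof (rule has_bochner_integral_nn_integral)
    show "(\<lambda>t. indicator {0..} t * t powr (a - 1) / exp t) \<in> borel_measurable lborel" by measurable
    show "AE x in lborel. 0 \<le> indicator {0..} x * x powr (a - 1) / exp x" by (intro AE_I2) (simp add: indicator_def)
    show "0 \<le> Gamma a" using assms by (simp add: Gamma_real_pos less_imp_le)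
    show "(\<integral>\<^sup>+t. ennreal (indicator {0..} t * t powr (a - 1) / exp t) \<partial>lborel) = ennreal (Gamma a)" by (rule nn)
  qed
  then show ?thesis by (rule hbi_eq[OF _ eq refl])
qed

lemma gamma_scaled:
  assumes "(a::real) > 0" "b > 0"
  shows "has_bochner_integral lborel (\<lambda>t. indicator {0<..} t * (t powr (a-1) * exp (- (b*t)))) (Gamma a / b powr a)"
proof -
  have h1: "has_bochner_integral lborel (\<lambda>x. (\<lambda>t. indicator {0<..} t * (t powr (a-1) / exp t)) (0 + b * x)) (Gamma a /\<^sub>R \<bar>b\<bar>)"
  proof -
    have b0: "b \<noteq> 0" using assms by simp
    show ?thesis
      using lborel_has_bochner_integral_real_affine_iff[OF b0, of "\<lambda>t. indicator {0<..} t * (t powr (a-1) / exp t)" "Gamma a" 0]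
        gamma_base[OF assms(1)] by (rule iffD1)
  qed
  have h2: "has_bochner_integral lborel (\<lambda>x. b powr (1 - a) * ((\<lambda>t. indicator {0<..} t * (t powr (a-1) / exp t)) (0 + b * x))) (b powr (1 - a) * (Gamma a /\<^sub>R \<bar>b\<bar>))"
    by (rule has_bochner_integral_mult_right[OF h1])
  have v: "b powr (1 - a) * (Gamma a /\<^sub>R \<bar>b\<bar>) = Gamma a / b powr a"
    using assms by (simp add: powr_diff field_simps)
  have fe: "(\<lambda>x. b powr (1 - a) * ((\<lambda>t. indicator {0<..} t * (t powr (a-1) / exp t)) (0 + b * x)))
      = (\<lambda>x. indicator {0<..} x * (x powr (a-1) * exp (- (b*x))))"
  proof
    fix x :: real
    show "b powr (1 - a) * ((\<lambda>t. indicator {0<..} t * (t powr (a-1) / exp t)) (0 + b * x))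
      = indicator {0<..} x * (x powr (a-1) * exp (- (b*x)))"
      using assms by (auto simp: indicator_def powr_mult zero_less_mult_iff powr_diff exp_minus field_simps powr_minus)
  qed
  show ?thesis by (rule hbi_eq[OF h2 fe v])
qed



locale tang =
  fixes F K :: "real \<Rightarrow> real" and lam r :: real
  assumes lam: "lam > 0" and der: "\<And>t. t > 0 \<Longrightarrow> (F has_real_derivative K t * t powr (lam - 1)) (at t)"
   and mono: "\<And>s t. 0 < s \<Longrightarrow> s \<le> t \<Longrightarrow> K t \<le> K s" and r: "r > 0"
begin

definition psi where "psi u = F r + K r / lam * (u powr lam - r powr lam) - F u"

lemma dpsi: "u > 0 \<Longrightarrow> (psi has_real_derivative (K r - K u) * u powr (lam-1)) (at u)"
proof -
  assume u: "u > 0"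
  have "(psi has_real_derivative 0 + K r / lam * (lam * u powr (lam-1) - 0) - K u * u powr (lam-1)) (at u)"
    unfolding psi_def[abs_def]
    by (intro DERIV_diff DERIV_add DERIV_cmult DERIV_const has_real_derivative_powr der u)
  then show ?thesis using lam by (simp add: algebra_simps)
qed

lemma psi_r: "psi r = 0" by (simp add: psi_def)

lemma mvt:
  assumes ab: "a < b" and a0: "0 < a"
  shows "\<exists>z. a < z \<and> z < b \<and> psi b - psi a = (b - a) * ((K r - K z) * z powr (lam-1))"
proof -
  have der: "(psi has_real_derivative (K r - K u) * u powr (lam-1)) (at u)" if "a \<le> u" "u \<le> b" for u
  proof -
    have "u > 0" using that a0 by linarith
    thus ?thesis by (rule dpsi)
  qed
  show ?thesis by (rule MVT2[OF ab der])
qed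

lemma psi_nonneg: assumes t: "t > 0" shows "psi t \<ge> 0"
proof -
  consider "t < r" | "t = r" | "t > r" by linarith
  then show ?thesis
  proof cases
    case 1
    obtain z where z: "t < z" "z < r" "psi r - psi t = (r - t) * ((K r - K z) * z powr (lam-1))"
      using mvt[OF 1 t] by blast
    have "K r \<le> K z" using mono[of z r] z t by simp
    hence "(r - t) * ((K r - K z) * z powr (lam-1)) \<le> 0" using z
      by (intro mult_nonneg_nonpos mult_nonpos_nonneg) auto
    then show ?thesis using z psi_r by simp
  next
    case 2 then show ?thesis using psi_r by simp
  next
    case 3
    obtain z where z: "r < z" "z < t" "psi t - psi r = (t - r) * ((K r - K z) * z powr (lam-1))"
      using mvt[OF 3 r] by blast
    have "K z \<le> K r" using mono[of r z] z r by simp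
    hence "(t - r) * ((K r - K z) * z powr (lam-1)) \<ge> 0" using z by simp
    then show ?thesis using z psi_r by simp
  qed
qed

lemma psi_pos_right: assumes "t1 > r" "K t1 < K r" "t > t1" shows "psi t > 0"
proof -
  obtain z where z: "t1 < z" "z < t" "psi t - psi t1 = (t - t1) * ((K r - K z) * z powr (lam-1))"
    using mvt[OF assms(3) order.strict_trans[OF r assms(1)]] by blast
  have "K z \<le> K t1" using mono[of t1 z] z r assms by simp
  hence "(t - t1) * ((K r - K z) * z powr (lam-1)) > 0" using z assms r by simp
  moreover have "psi t1 \<ge> 0" using psi_nonneg[of t1] assms r by simp
  ultimately show ?thesis using z by simp
qed

lemma psi_pos_left: assumes "t1 < r" "K t1 > K r" "0 < t" "t < t1" shows "psi t > 0"
proof -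
  obtain z where z: "t < z" "z < t1" "psi t1 - psi t = (t1 - t) * ((K r - K z) * z powr (lam-1))"
    using mvt[OF assms(4) assms(3)] by blast
  have "K t1 \<le> K z" using mono[of z t1] z assms by simp
  hence "(t1 - t) * ((K r - K z) * z powr (lam-1)) < 0" using z assms
    by (intro mult_pos_neg mult_neg_pos) auto
  moreover have "psi t1 \<ge> 0" using psi_nonneg[of t1] assms by simp
  ultimately show ?thesis using z by simp
qed

lemma psi_const: assumes "\<And>u. u > 0 \<Longrightarrow> K u = K r" "t > 0" shows "psi t = 0"
proof -
  have "psi t \<le> 0"
  proof (cases "t < r")
    case True
    obtain z where z: "t < z" "z < r" "psi r - psi t = (r - t) * ((K r - K z) * z powr (lam-1))"
      using mvt[OF True assms(2)] by blast
    have "K z = K r" using assms(1)[of z] z assms(2) by linarith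
    then show ?thesis using z psi_r by simp
  next
    case False
    show ?thesis
    proof (cases "t = r")
      case False
      then have tr: "r < t" using \<open>\<not> t < r\<close> by simp
      obtain z where z: "r < z" "z < t" "psi t - psi r = (t - r) * ((K r - K z) * z powr (lam-1))"
        using mvt[OF tr r] by blast
      have "K z = K r" using assms(1)[of z] z r by linarith
      then show ?thesis using z psi_r by simp
    qed (simp add: psi_r)
  qed
  with psi_nonneg[OF assms(2)] show ?thesis by simp
qed

end



lemma gamma_moment:
  assumes y: "(y::real) > 0" and x: "x > 0" and p: "p \<ge> 0"
  shows "has_bochner_integral lborel (\<lambda>t. indicator {0<..} t * (t powr p * gamma_dens y x t))
           ((x/y) powr p * Gamma (y+p) / Gamma y)"
proof -
  define C where "C = (1 / Gamma y) * (y/x) powr y"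
  have gs: "has_bochner_integral lborel (\<lambda>t. indicator {0<..} t * (t powr (y+p-1) * exp (- ((y/x)*t)))) (Gamma (y+p) / (y/x) powr (y+p))"
    by (rule gamma_scaled) (use x y p in auto)
  have hb: "has_bochner_integral lborel (\<lambda>t. C * (indicator {0<..} t * (t powr (y+p-1) * exp (- ((y/x)*t))))) (C * (Gamma (y+p) / (y/x) powr (y+p)))"
    by (rule has_bochner_integral_mult_right[OF gs])
  have v: "C * (Gamma (y+p) / (y/x) powr (y+p)) = (x/y) powr p * Gamma (y+p) / Gamma y"
    using x y by (simp add: C_def powr_add powr_divide field_simps)
  have fe: "(\<lambda>t. C * (indicator {0<..} t * (t powr (y+p-1) * exp (- ((y/x)*t))))) = (\<lambda>t. indicator {0<..} t * (t powr p * gamma_dens y x t))"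
  proof (rule ext)
    fix t show "C * (indicator {0<..} t * (t powr (y+p-1) * exp (- ((y/x)*t)))) = indicator {0<..} t * (t powr p * gamma_dens y x t)"
  proof (cases "t > 0")
    case True
    have "t powr (y+p-1) = t powr p * t powr (y-1)" using True by (simp add: powr_add[symmetric] algebra_simps)
    moreover have "- ((y/x)*t) = - t * y / x" by simp
    ultimately show ?thesis using True by (simp add: C_def gamma_dens_def)
  qed simp
  qed
  show ?thesis by (rule hbi_eq[OF hb fe v])
qed

lemma integral_pos_interval:
  fixes u :: "real \<Rightarrow> real"
  assumes "integrable lborel u" "\<And>t. u t \<ge> 0" "a < b" "\<And>t. a < t \<Longrightarrow> t < b \<Longrightarrow> u t > 0"
  shows "integral\<^sup>L lborel u > 0"
proof -
  have ge: "integral\<^sup>L lborel u \<ge> 0" by (intro integral_nonneg_AE AE_I2 assms(2))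
  have "integral\<^sup>L lborel u \<noteq> 0"
  proof
    assume "integral\<^sup>L lborel u = 0"
    hence h: "AE t in lborel. u t = 0" using integral_nonneg_eq_0_iff_AE[OF assms(1) AE_I2[OF assms(2)]] by blast
    have imp: "u t = 0 \<longrightarrow> t \<notin> {a<..<b}" for t
    proof (intro impI notI)
      assume "u t = 0" "t \<in> {a<..<b}"
      then show False using assms(4)[of t] by simp
    qed
    have ae: "AE t in lborel. t \<notin> {a<..<b}" using AE_mp[OF h AE_I2[OF imp]] .
    have "{x \<in> space lborel. \<not> x \<notin> {a<..<b}} = {a<..<b}" by auto
    hence "emeasure lborel {a<..<b} = 0" using AE_iff_measurable[of "{a<..<b}" lborel "\<lambda>t. t \<notin> {a<..<b}"] ae by simp
    thus False using assms(3) by simp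
  qed
  with ge show ?thesis by simp
qed



lemma aux_half: "(b::real) + (a - b) / 2 - a = - (a - b) / 2"
  by (simp add: field_simps)


theorem theorem1p2:
  fixes lam :: real and f :: "real \<Rightarrow> real"
  assumes "lam > 0"
    and "gen_bernstein lam f"
    and "bounded (f ` {0<..})"
    and "\<exists>a>0. \<exists>b>0. f a \<noteq> f b"
  shows "(lam \<le> 1 \<longrightarrow> (\<forall>x>0. \<forall>y>0.
            (LBINT t:{0<..}. f t * gamma_dens y x t) < f x))
       \<and> (lam > 1 \<longrightarrow> (\<forall>x>0. \<forall>y>0.
            g_lam lam y * (LBINT t:{0<..}. f t * gamma_dens y x t) < f x))"
proof -
  have lam: "lam > 0" by fact
  define H where "H = (\<lambda>x. deriv f x * x powr (1 - lam))"
  have gb: "(\<forall>x>0. f x \<ge> 0) \<and> smooth_on {0<..} f \<and> completely_monotonic_on {0<..} (\<lambda>x. deriv f x * x powr (1 - lam))"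
    using assms(2) unfolding gen_bernstein_def .
  have fpos: "\<And>t. t > 0 \<Longrightarrow> f t \<ge> 0"
    using conjunct1[OF gb] by simp
  have sm: "smooth_on {0<..} f"
    using conjunct1[OF conjunct2[OF gb]] .
  have cm: "completely_monotonic_on {0<..} H"
    unfolding H_def using conjunct2[OF conjunct2[OF gb]] .
  have fder: "(f has_real_derivative deriv f t) (at t)" if "t > 0" for t
  proof -
    have "((deriv ^^ 0) f) differentiable (at t)" using sm that unfolding smooth_on_def by blast
    thus ?thesis by (simp add: DERIV_deriv_iff_real_differentiable)
  qed
  have Hder: "(H has_real_derivative deriv H t) (at t)" if "t > 0" for t
  proof -
    have "((deriv ^^ 0) H) differentiable (at t)" using cm that
      unfolding completely_monotonic_on_def smooth_on_def by blast
    thus ?thesis by (simp add: DERIV_deriv_iff_real_differentiable)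
  qed
  have Hnn: "H t \<ge> 0" if "t > 0" for t
  proof -
    have "(-1) ^ 0 * (deriv ^^ 0) H t \<ge> 0" using cm that
      unfolding completely_monotonic_on_def by blast
    thus ?thesis by simp
  qed
  have dH: "deriv H t \<le> 0" if "t > 0" for t
  proof -
    have "(-1) ^ 1 * (deriv ^^ 1) H t \<ge> 0" using cm that
      unfolding completely_monotonic_on_def by blast
    thus ?thesis by simp
  qed
  have Hmono: "H t \<le> H s" if "0 < s" "s \<le> t" for s t
  proof (cases "s = t")
    case False
    hence st: "s < t" using that by simp
    have der: "\<And>u. s \<le> u \<Longrightarrow> u \<le> t \<Longrightarrow> (H has_real_derivative deriv H u) (at u)"
      using Hder that by simp
    obtain z where z: "s < z" "z < t" "H t - H s = (t - s) * deriv H z"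
      using MVT2[OF st der] by blast
    have "(t - s) * deriv H z \<le> 0" using dH[of z] z that by (intro mult_nonneg_nonpos) auto
    thus ?thesis using z by simp
  qed simp
  have fder2: "(f has_real_derivative H t * t powr (lam - 1)) (at t)" if "t > 0" for t
  proof -
    have "H t * t powr (lam - 1) = deriv f t * (t powr (1 - lam) * t powr (lam - 1))"
      by (simp add: H_def)
    also have "\<dots> = deriv f t" using that by (simp add: powr_add[symmetric])
    finally show ?thesis using fder[OF that] by simp
  qed
  have T: "tang f H lam r" if "r > 0" for r
    using lam fder2 Hmono that by unfold_locales auto
  have tangent: "f t \<le> f r + H r / lam * (t powr lam - r powr lam)" if "r > 0" "t > 0" for r t
    using tang.psi_nonneg[OF T[OF that(1)] that(2)] unfolding tang.psi_def[OF T[OF that(1)]] by simp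
  have fmono: "f s \<le> f t" if "0 < s" "s \<le> t" for s t
  proof (cases "s = t")
    case False
    hence st: "s < t" using that by simp
    have der: "\<And>u. s \<le> u \<Longrightarrow> u \<le> t \<Longrightarrow> (f has_real_derivative H u * u powr (lam - 1)) (at u)"
      using fder2 that by simp
    obtain z where z: "s < z" "z < t" "f t - f s = (t - s) * (H z * z powr (lam - 1))"
      using MVT2[OF st der] by blast
    have "(t - s) * (H z * z powr (lam - 1)) \<ge> 0" using Hnn[of z] z that by simp
    thus ?thesis using z by simp
  qed simp
  obtain B where B: "\<And>t. t > 0 \<Longrightarrow> \<bar>f t\<bar> \<le> B"
    using assms(3) unfolding bounded_iff by auto
  have strict: "\<exists>a b. a < b \<and> (\<forall>t. a < t \<and> t < b \<longrightarrow> t > 0 \<and> tang.psi f H lam r t > 0)"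
    if r: "r > 0" for r
  proof (cases "\<exists>t1>0. H t1 \<noteq> H r")
    case True
    then obtain t1 where t1: "t1 > 0" "H t1 \<noteq> H r" by auto
    show ?thesis
    proof (cases "t1 < r")
      case True
      have "H t1 > H r" using Hmono[of t1 r] True t1 by simp
      then show ?thesis using tang.psi_pos_left[OF T[OF r] True] t1
        by (intro exI[of _ 0] exI[of _ t1]) auto
    next
      case False
      moreover have "t1 \<noteq> r" using t1 by auto
      ultimately have "t1 > r" by simp
      moreover have "H t1 < H r" using Hmono[of r t1] \<open>t1 > r\<close> t1 r by simp
      ultimately show ?thesis using tang.psi_pos_right[OF T[OF r]] t1 r
        by (intro exI[of _ t1] exI[of _ "t1 + 1"]) auto
    qed
  next
    case False
    hence cst: "\<And>u. u > 0 \<Longrightarrow> H u = H r" by auto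
    have feq: "f t = f r + H r / lam * (t powr lam - r powr lam)" if "t > 0" for t
      using tang.psi_const[OF T[OF r] cst that] unfolding tang.psi_def[OF T[OF r]] by simp
    show ?thesis
    proof (cases "H r = 0")
      case True
      then have fc: "\<And>t. t > 0 \<Longrightarrow> f t = f r" using feq by simp
      obtain a b where "a > 0" "b > 0" "f a \<noteq> f b" using assms(4) by blast
      then show ?thesis using fc[of a] fc[of b] by simp
    next
      case False
      hence Hr: "H r > 0" using Hnn[OF r] by simp
      define Q where "Q = lam * (B + \<bar>f r\<bar> + 1) / H r + r powr lam"
      have B0: "B \<ge> 0" using B[OF r] by simp
      have Qp: "Q > 0" unfolding Q_def using Hr lam B0 by (intro add_pos_nonneg) auto
      define t where "t = Q powr (1 / lam)"
      have tp: "t > 0" using Qp by (simp add: t_def)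
      have tl: "t powr lam = Q" using Qp lam by (simp add: t_def powr_powr)
      have "H r / lam * (t powr lam - r powr lam) = H r / lam * (lam * (B + \<bar>f r\<bar> + 1) / H r)"
        by (simp add: tl Q_def)
      also have "\<dots> = B + \<bar>f r\<bar> + 1" using Hr lam by simp
      finally have "f t = f r + (B + \<bar>f r\<bar> + 1)" using feq[OF tp] by simp
      hence "f t > B" by simp
      with B[OF tp] show ?thesis by simp
    qed
  qed
  have fH: "H x * x powr lam / lam \<le> f x" if x: "x > 0" for x
  proof (rule ccontr)
    assume neg: "\<not> ?thesis"
    define d where "d = H x * x powr lam / lam - f x"
    have d: "d > 0" using neg by (simp add: d_def)
    have Hx: "H x > 0"
    proof -
      have "H x * x powr lam / lam > 0" using d fpos[OF x] unfolding d_def by linarith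
      thus ?thesis using Hnn[OF x] lam x by (simp add: zero_less_mult_iff zero_less_divide_iff)
    qed
    define t where "t = (d * lam / (2 * H x)) powr (1 / lam)"
    have tp: "t > 0" using d lam Hx by (simp add: t_def)
    have tl: "t powr lam = d * lam / (2 * H x)" using d lam Hx by (simp add: t_def powr_powr)
    have "f t \<le> f x + H x / lam * (t powr lam - x powr lam)" by (rule tangent[OF x tp])
    also have "\<dots> = f x + (H x / lam * (d * lam / (2 * H x)) - H x / lam * x powr lam)"
      by (simp add: tl right_diff_distrib)
    also have "H x / lam * (d * lam / (2 * H x)) = d / 2" using lam Hx by simp
    also have "f x + (d / 2 - H x / lam * x powr lam) = f x + d / 2 - H x * x powr lam / lam" by simp
    also have "\<dots> = - d / 2" unfolding d_def by (rule aux_half)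
    finally show False using fpos[OF tp] d by simp
  qed

  have common: "\<exists>r>0. r powr lam = (x/y) powr lam * Gamma (y+lam) / Gamma y
      \<and> (LBINT t:{0<..}. f t * gamma_dens y x t) < f r
      \<and> (lam \<le> 1 \<longrightarrow> r \<le> x) \<and> (lam > 1 \<longrightarrow> x \<le> r)" if x: "x > 0" and y: "y > 0" for x y
  proof -
    let ?D = "gamma_dens y x"
    let ?i = "indicator {0<..} :: real \<Rightarrow> real"
    have Gy: "Gamma y > 0" using y by (simp add: Gamma_real_pos)
    have Gy0: "Gamma y \<noteq> 0" using Gy by linarith
    have Dpos: "?D t > 0" if "t > 0" for t
      unfolding gamma_dens_def using x y that Gy by simp
    have I0: "has_bochner_integral lborel (\<lambda>t. ?i t * ?D t) 1"
    proof (rule hbi_eq[OF gamma_moment[OF y x order.refl]])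
      show "(\<lambda>t. ?i t * (t powr 0 * ?D t)) = (\<lambda>t. ?i t * ?D t)"
        by (rule ext) (simp add: indicator_def)
      show "(x/y) powr 0 * Gamma (y+0) / Gamma y = 1" using x y by (simp add: Gy0)
    qed
    have I1: "has_bochner_integral lborel (\<lambda>t. ?i t * (t * ?D t)) x"
    proof (rule hbi_eq[OF gamma_moment[OF y x zero_le_one]])
      show "(\<lambda>t. ?i t * (t powr 1 * ?D t)) = (\<lambda>t. ?i t * (t * ?D t))"
        by (rule ext) (simp add: indicator_def)
      have "y \<notin> \<int>\<^sub>\<le>\<^sub>0" using y by (auto dest: nonpos_Ints_nonpos)
      hence "Gamma (y + 1) = y * Gamma y" by (rule Gamma_plus1)
      thus "(x/y) powr 1 * Gamma (y+1) / Gamma y = x" using x y by (simp add: Gy0)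
    qed
    define m where "m = (x/y) powr lam * Gamma (y+lam) / Gamma y"
    have mpos: "m > 0" using x y Gy lam by (simp add: m_def Gamma_real_pos)
    have Im: "has_bochner_integral lborel (\<lambda>t. ?i t * (t powr lam * ?D t)) m"
      unfolding m_def by (rule gamma_moment[OF y x]) (use lam in simp)
    define c where "c = lam * x powr (lam - 1)"
    have J: "has_bochner_integral lborel
        (\<lambda>t. (x powr lam - c * x) * (?i t * ?D t) + c * (?i t * (t * ?D t)) - ?i t * (t powr lam * ?D t))
        ((x powr lam - c * x) * 1 + c * x - m)"
      by (intro has_bochner_integral_diff has_bochner_integral_add has_bochner_integral_mult_right I0 I1 Im)
    have Jeq: "(x powr lam - c * x) * (?i t * ?D t) + c * (?i t * (t * ?D t)) - ?i t * (t powr lam * ?D t)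
        = ?i t * (?D t * (x powr lam + c * (t - x) - t powr lam))" for t
      by (simp add: algebra_simps)
    have mx1: "m \<le> x powr lam" if l1: "lam \<le> 1"
    proof -
      have TT: "tang (\<lambda>t. t powr lam) (\<lambda>t. lam * t powr (lam - 1)) 1 x"
      proof
        fix t :: real assume "t > 0"
        thus "((\<lambda>t. t powr lam) has_real_derivative lam * t powr (lam - 1) * t powr (1 - 1)) (at t)"
          using has_real_derivative_powr[of t lam] by simp
      next
        fix s t :: real assume "0 < s" "s \<le> t"
        thus "lam * t powr (lam - 1) \<le> lam * s powr (lam - 1)"
          using powr_mono2'[of "lam - 1" s t] l1 lam by (intro mult_left_mono) auto
      qed (use x in auto)
      have pw: "t powr lam \<le> x powr lam + c * (t - x)" if "t > 0" for t
        using tang.psi_nonneg[OF TT that] x that unfolding tang.psi_def[OF TT] c_def by simp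
      have "0 \<le> integral\<^sup>L lborel (\<lambda>t. (x powr lam - c * x) * (?i t * ?D t) + c * (?i t * (t * ?D t)) - ?i t * (t powr lam * ?D t))"
        unfolding Jeq
      proof (rule integral_nonneg_AE, rule AE_I2)
        fix t :: real
        show "0 \<le> ?i t * (?D t * (x powr lam + c * (t - x) - t powr lam))"
          using pw[of t] Dpos[of t] by (cases "t > 0") (auto simp: indicator_def)
      qed
      thus ?thesis using has_bochner_integral_integral_eq[OF J] by simp
    qed
    have mx2: "m \<ge> x powr lam" if l1: "lam > 1"
    proof -
      have TT: "tang (\<lambda>t. - (t powr lam)) (\<lambda>t. - (lam * t powr (lam - 1))) 1 x"
      proof
        fix t :: real assume "t > 0"
        thus "((\<lambda>t. - (t powr lam)) has_real_derivative - (lam * t powr (lam - 1)) * t powr (1 - 1)) (at t)"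
          using has_real_derivative_powr[of t lam] DERIV_minus by fastforce
      next
        fix s t :: real assume "0 < s" "s \<le> t"
        thus "- (lam * t powr (lam - 1)) \<le> - (lam * s powr (lam - 1))"
          using powr_mono2[of "lam - 1" s t] l1 lam by simp
      qed (use x in auto)
      have pw: "t powr lam \<ge> x powr lam + c * (t - x)" if "t > 0" for t
        using tang.psi_nonneg[OF TT that] x that unfolding tang.psi_def[OF TT] c_def by simp
      have "0 \<le> integral\<^sup>L lborel (\<lambda>t. - ((x powr lam - c * x) * (?i t * ?D t) + c * (?i t * (t * ?D t)) - ?i t * (t powr lam * ?D t)))"
        unfolding Jeq
      proof (rule integral_nonneg_AE, rule AE_I2)
        fix t :: real
        show "0 \<le> - (?i t * (?D t * (x powr lam + c * (t - x) - t powr lam)))"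
          using pw[of t] Dpos[of t] by (cases "t > 0") (auto simp: indicator_def mult_nonneg_nonpos)
      qed
      hence "0 \<le> - integral\<^sup>L lborel (\<lambda>t. (x powr lam - c * x) * (?i t * ?D t) + c * (?i t * (t * ?D t)) - ?i t * (t powr lam * ?D t))"
        by (simp only: integral_minus)
      thus ?thesis using has_bochner_integral_integral_eq[OF J] by simp
    qed
    define r where "r = m powr (1 / lam)"
    have rpos: "r > 0" using mpos by (simp add: r_def)
    have rl: "r powr lam = m" using mpos lam by (simp add: r_def powr_powr)
    have meas: "(\<lambda>t. ?i t * (f t * ?D t)) \<in> borel_measurable lborel"
    proof -
      have "continuous_on {0<..} (\<lambda>t. f t * ?D t)"
      proof (intro continuous_on_mult)
        show "continuous_on {0<..} f"
          by (rule continuous_at_imp_continuous_on) (use fder DERIV_isCont in auto)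
        show "continuous_on {0<..} ?D"
          unfolding gamma_dens_def using x y by (intro continuous_intros) auto
      qed
      from borel_measurable_continuous_on_indicator[OF _ this] show ?thesis by simp
    qed
    have intE: "integrable lborel (\<lambda>t. ?i t * (f t * ?D t))"
    proof (rule Bochner_Integration.integrable_bound[OF _ meas])
      show "integrable lborel (\<lambda>t. B * (?i t * ?D t))"
        using I0 by (intro integrable_mult_right) (auto simp: has_bochner_integral_iff)
      show "AE t in lborel. norm (?i t * (f t * ?D t)) \<le> norm (B * (?i t * ?D t))"
      proof (rule AE_I2)
        fix t :: real
        show "norm (?i t * (f t * ?D t)) \<le> norm (B * (?i t * ?D t))"
        proof (cases "t > 0")
          case True
          have "\<bar>f t\<bar> * ?D t \<le> \<bar>B\<bar> * ?D t" using B[OF True] Dpos[OF True] by (intro mult_right_mono) auto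
          thus ?thesis using True Dpos[OF True] by (simp add: abs_mult)
        qed simp
      qed
    qed
    define E where "E = integral\<^sup>L lborel (\<lambda>t. ?i t * (f t * ?D t))"
    have LE: "(LBINT t:{0<..}. f t * gamma_dens y x t) = E"
      by (simp add: set_lebesgue_integral_def E_def)
    define c2 where "c2 = H r / lam"
    have G: "has_bochner_integral lborel
        (\<lambda>t. f r * (?i t * ?D t) + c2 * (?i t * (t powr lam * ?D t)) - (c2 * r powr lam) * (?i t * ?D t) - ?i t * (f t * ?D t))
        (f r * 1 + c2 * m - (c2 * r powr lam) * 1 - E)"
      unfolding E_def
      by (intro has_bochner_integral_diff has_bochner_integral_add has_bochner_integral_mult_right I0 Im
            has_bochner_integral_integrable intE)
    have Geq: "f r * (?i t * ?D t) + c2 * (?i t * (t powr lam * ?D t)) - (c2 * r powr lam) * (?i t * ?D t) - ?i t * (f t * ?D t)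
        = ?i t * (?D t * tang.psi f H lam r t)" for t
      unfolding tang.psi_def[OF T[OF rpos]] c2_def by (simp add: algebra_simps)
    obtain a b where ab: "a < b" "\<And>t. a < t \<Longrightarrow> t < b \<Longrightarrow> t > 0 \<and> tang.psi f H lam r t > 0"
      using strict[OF rpos] by blast
    have "0 < integral\<^sup>L lborel (\<lambda>t. ?i t * (?D t * tang.psi f H lam r t))"
    proof (rule integral_pos_interval[OF _ _ ab(1)])
      show "integrable lborel (\<lambda>t. ?i t * (?D t * tang.psi f H lam r t))"
        using G unfolding Geq by (auto simp: has_bochner_integral_iff)
      fix t :: real
      show "0 \<le> ?i t * (?D t * tang.psi f H lam r t)"
        using tang.psi_nonneg[OF T[OF rpos], of t] Dpos[of t] by (cases "t > 0") (auto simp: indicator_def)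
      assume "a < t" "t < b"
      thus "0 < ?i t * (?D t * tang.psi f H lam r t)" using ab(2)[of t] Dpos[of t] by (auto simp: indicator_def)
    qed
    hence "E < f r" using has_bochner_integral_integral_eq[OF G[unfolded Geq]] rl by simp
    moreover have "lam \<le> 1 \<longrightarrow> r \<le> x"
    proof
      assume "lam \<le> 1"
      hence "m powr (1/lam) \<le> (x powr lam) powr (1/lam)" using mx1 mpos lam by (intro powr_mono2) auto
      thus "r \<le> x" using lam x by (simp add: r_def powr_powr)
    qed
    moreover have "lam > 1 \<longrightarrow> x \<le> r"
    proof
      assume "lam > 1"
      hence "(x powr lam) powr (1/lam) \<le> m powr (1/lam)" using mx2 mpos lam by (intro powr_mono2) auto
      thus "x \<le> r" using lam x by (simp add: r_def powr_powr)
    qed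
    ultimately have "r > 0 \<and> r powr lam = (x/y) powr lam * Gamma (y+lam) / Gamma y
      \<and> (LBINT t:{0<..}. f t * gamma_dens y x t) < f r
      \<and> (lam \<le> 1 \<longrightarrow> r \<le> x) \<and> (lam > 1 \<longrightarrow> x \<le> r)"
      using rpos rl LE unfolding m_def by (intro conjI) simp_all
    thus ?thesis by (intro exI[of _ r]) simp
  qed
  show ?thesis
  proof (intro conjI impI allI)
    fix x y :: real assume l1: "lam \<le> 1" and x: "x > 0" and y: "y > 0"
    obtain r where r: "r > 0" "(LBINT t:{0<..}. f t * gamma_dens y x t) < f r" "lam \<le> 1 \<longrightarrow> r \<le> x"
      using common[OF x y] by blast
    have r3: "r \<le> x" using r(3) l1 by blast
    show "(LBINT t:{0<..}. f t * gamma_dens y x t) < f x" using r(2) fmono[OF r(1) r3] by linarith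
  next
    fix x y :: real assume l1: "lam > 1" and x: "x > 0" and y: "y > 0"
    obtain r where r: "r > 0" "r powr lam = (x/y) powr lam * Gamma (y+lam) / Gamma y"
      "(LBINT t:{0<..}. f t * gamma_dens y x t) < f r" "lam > 1 \<longrightarrow> x \<le> r"
      using common[OF x y] by blast
    have r4: "x \<le> r" using r(4) l1 by blast
    define m where "m = (x/y) powr lam * Gamma (y+lam) / Gamma y"
    have Gy: "Gamma y > 0" using y by (simp add: Gamma_real_pos)
    have Gyl: "Gamma (y + lam) > 0" using y lam by (simp add: Gamma_real_pos)
    have mpos: "m > 0" using x y Gy Gyl by (simp add: m_def)
    have g: "g_lam lam y = x powr lam / m"
    proof -
      have e1: "(x/y) powr lam = x powr lam / y powr lam" using x y by (simp add: powr_divide)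
      have xp: "x powr lam \<noteq> 0" "y powr lam \<noteq> 0" using x y by auto
      have g0a: "Gamma y \<noteq> 0" using Gy by linarith
      have g0b: "Gamma (y + lam) \<noteq> 0" using Gyl by linarith
      have g0c: "Gamma (lam + y) \<noteq> 0" using g0b by (metis add.commute)
      have g0: "Gamma y \<noteq> 0" "Gamma (y + lam) \<noteq> 0" "Gamma (lam + y) \<noteq> 0" "x \<noteq> 0" "y \<noteq> 0"
        using g0a g0b g0c x y by auto
      have e2: "Gamma (lam + y) = Gamma (y + lam)" by (simp add: add.commute)
      show ?thesis unfolding g_lam_def m_def e1 e2
        by (simp add: xp g0 field_simps)
    qed
    have gpos: "g_lam lam y > 0" using g mpos x by simp
    have xr: "x powr lam \<le> m" using r4 x lam r(2) powr_mono2[of lam x r] unfolding m_def by simp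
    have tg: "f r \<le> f x + H x / lam * (m - x powr lam)" using tangent[OF x r(1)] r(2) unfolding m_def by simp
    have "x powr lam * f r \<le> x powr lam * (f x + H x / lam * (m - x powr lam))"
      using tg x by (intro mult_left_mono) auto
    also have "\<dots> = x powr lam * f x + (H x * x powr lam / lam) * (m - x powr lam)" using lam by (simp add: field_simps)
    also have "\<dots> \<le> x powr lam * f x + f x * (m - x powr lam)"
      using fH[OF x] xr by (intro add_left_mono mult_right_mono) auto
    also have "\<dots> = m * f x" by (simp add: algebra_simps)
    finally have key: "x powr lam * f r \<le> m * f x" .
    have "g_lam lam y * (LBINT t:{0<..}. f t * gamma_dens y x t) < g_lam lam y * f r"
      by (rule mult_strict_left_mono[OF r(3) gpos])
    also have "g_lam lam y * f r = (x powr lam * f r) / m" unfolding g by simp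
    also have "\<dots> \<le> (m * f x) / m" using key mpos by (intro divide_right_mono) auto
    also have "\<dots> = f x" using mpos by simp
    finally show "g_lam lam y * (LBINT t:{0<..}. f t * gamma_dens y x t) < f x" .
  qed
qed


end
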